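(* For every $n\ge 3$, under the uniform model the expected Sackin index is $$E_U(S_n)=\frac{n}{2n-3}\,{}_3F_2\!\left(\begin{matrix}2,\ 2,\ 2-n\\ 1,\ 4-2n\end{matrix};2\right)=\frac{n}{2n-3}\sum_{k=0}^{n-2}\frac{(2)_k(2)_k(2-n)_k}{(1)_k(4-2n)_k}\cdot\frac{2^k}{k!},$$ where $(a)_k=a(a+1)\cdots(a+k-1)$ (the hypergeometric series terminates at $k=n-2$).
   Context: $\mathcal{BT}_n$ is the set of (isomorphism classes of) binary phylogenetic trees with leaves bijectively labeled by $\{1,\dots,n\}$ (rooted, every internal node with exactly two children); $|\mathcal{BT}_n|=(2n-3)!!$. The Sackin index is $S(T)=\sum_{i=1}^n\delta_T(i)$, where $\delta_T(i)$ is the number of arcs from the root to leaf $i$. $S_n$ is $S(T)$ for random $T\in\mathcal{BT}_n$. The uniform model gives every $T\in\mathcal{BT}_n$ probability $1/(2n-3)!!$; $E_U$ is expectation under it. ${}_pF_q$ denotes the generalized hypergeometric function $\sum_{k\ge0}\frac{(a_1)_k\cdots(a_p)_k}{(b_1)_k\cdots(b_q)_k}\frac{z^k}{k!}$. *)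

theory Defs
  imports Complex_Main
begin

text \<open>Rooted binary trees with leaf labels (plane representatives).\<close>
datatype ptree = Lf nat | Nd ptree ptree

fun leaves :: "ptree \<Rightarrow> nat list" where
  "leaves (Lf a) = [a]"
| "leaves (Nd l r) = leaves l @ leaves r"

fun leaf_depths :: "ptree \<Rightarrow> nat list" where
  "leaf_depths (Lf a) = [0]"
| "leaf_depths (Nd l r) = map Suc (leaf_depths l @ leaf_depths r)"

definition sackin :: "ptree \<Rightarrow> nat" where
  "sackin t = sum_list (leaf_depths t)"

inductive tree_iso :: "ptree \<Rightarrow> ptree \<Rightarrow> bool" where
  iso_leaf: "tree_iso (Lf a) (Lf a)"
| iso_node: "tree_iso l l' \<Longrightarrow> tree_iso r r' \<Longrightarrow> tree_iso (Nd l r) (Nd l' r')"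
| iso_swap: "tree_iso l l' \<Longrightarrow> tree_iso r r' \<Longrightarrow> tree_iso (Nd l r) (Nd r' l')"

definition labelled_trees :: "nat \<Rightarrow> ptree set" where
  "labelled_trees n = {t. distinct (leaves t) \<and> set (leaves t) = {1..n}}"

definition BT :: "nat \<Rightarrow> ptree set set" where
  "BT n = labelled_trees n // {(s, t). tree_iso s t}"

definition sackin_class :: "ptree set \<Rightarrow> nat" where
  "sackin_class C = the_elem (sackin ` C)"

definition E_U_sackin :: "nat \<Rightarrow> real" where
  "E_U_sackin n = (\<Sum>C\<in>BT n. real (sackin_class C)) / real (card (BT n))"

end

theory Submission
  imports Defs
begin


definition cc :: "nat \<Rightarrow> nat \<Rightarrow> real" where
  "cc N k = (\<Prod>i<k. (real N - real i) / (2 * real N - real i))"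
definition hh :: "nat \<Rightarrow> nat \<Rightarrow> real" where
  "hh N k = (\<Prod>i<k. (real N + 1 - real i) / (2 * real N - real i))"
definition QQ :: "nat \<Rightarrow> nat \<Rightarrow> real" where
  "QQ N m = -(real N+1)*(2*real N+1)-(real N-1)*real m-(10*real N-7)*real m*(real m-1)/2
     -(6*real N-21)*real m*(real m-1)*(real m-2)/6+real m*(real m-1)*(real m-2)*(real m-3)/2"
definition SS :: "nat \<Rightarrow> real" where
  "SS N = (\<Sum>k=0..N. (real k + 1)^2 * 2^k * cc N k)"

lemma cc_Suc: "cc N (Suc k) = cc N k * ((real N - real k) / (2 * real N - real k))"
  by (simp add: cc_def)
lemma hh_Suc: "hh N (Suc k) = hh N k * ((real N + 1 - real k) / (2 * real N - real k))"
  by (simp add: hh_def)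

lemma cc_hh: "cc N k * (real N + 1) = hh N k * (real N + 1 - real k)"
proof (induction k)
  case 0 then show ?case by (simp add: cc_def hh_def)
next
  case (Suc k)
  have "cc N (Suc k) * (real N + 1) = (cc N k * (real N + 1)) * ((real N - real k) / (2 * real N - real k))"
    by (simp add: cc_Suc)
  also have "\<dots> = hh N k * (real N + 1 - real k) * ((real N - real k) / (2 * real N - real k))"
    using Suc by simp
  also have "\<dots> = hh N (Suc k) * (real N + 1 - real (Suc k))"
    by (simp add: hh_Suc)
  finally show ?case .
qed

lemma cc_shift:
  assumes "N \<ge> 1" "k \<le> N + 1"
  shows "cc (Suc N) k * ((2*real N+2)*(2*real N+1)) = hh N k * ((2*real N+2-real k)*(2*real N+1-real k))"
  using assms(2)
proof (induction k)
  case 0 then show ?case by (simp add: cc_def hh_def)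
next
  case (Suc k)
  then have k: "k \<le> N" by simp
  have ne1: "2 * real N - real k \<noteq> 0" using k assms(1) by simp
  have ne2: "2 * real (Suc N) - real k \<noteq> 0" using k assms(1) by simp
  have "cc (Suc N) (Suc k) * ((2*real N+2)*(2*real N+1)) =
     (cc (Suc N) k * ((2*real N+2)*(2*real N+1))) * ((real (Suc N) - real k) / (2 * real (Suc N) - real k))"
    by (simp add: cc_Suc)
  also have "\<dots> = hh N k * ((2*real N+2-real k)*(2*real N+1-real k)) * ((real (Suc N) - real k) / (2 * real (Suc N) - real k))"
    using Suc k by simp
  also have "\<dots> = hh N k * (2*real N+1-real k) * (real N + 1 - real k)"
    using ne2 by (simp add: field_simps)
  also have "\<dots> = hh N (Suc k) * ((2*real N+2-real (Suc k))*(2*real N+1-real (Suc k)))"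
    using ne1 by (simp add: hh_Suc field_simps)
  finally show ?case .
qed

lemma cc_zero: "cc N (Suc N) = 0"
  by (simp add: cc_def)
lemma hh_zero: "hh N (N+2) = 0"
  by (simp add: hh_def)

lemma poly_id:
  fixes N k :: real
  assumes "N \<ge> 2" "k \<le> N + 1" "k \<ge> 0"
  shows "(2*N+1)*(k+1)^2*(2*N+2-k)*(2*N+1-k)/((2*N+2)*(2*N+1)) - 2*(N+2)*(k+1)^2*(N+1-k)/(N+1)
    = 2*(-(N+1)*(2*N+1)-(N-1)*(k+1)-(10*N-7)*(k+1)*((k+1)-1)/2
     -(6*N-21)*(k+1)*((k+1)-1)*((k+1)-2)/6+(k+1)*((k+1)-1)*((k+1)-2)*((k+1)-3)/2)*(N+1-k)/((2*N-k)*(N+1))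
     - (-(N+1)*(2*N+1)-(N-1)*k-(10*N-7)*k*(k-1)/2
     -(6*N-21)*k*(k-1)*(k-2)/6+k*(k-1)*(k-2)*(k-3)/2)/(N+1)"
proof -
  have h: "2*N - k \<noteq> 0" "N + 1 \<noteq> 0" "2*N+1 \<noteq> 0" "2*N+2 \<noteq> 0" "(2*N+2)*(2*N+1) \<noteq> 0"
     "(2*N - k)*(N+1) \<noteq> 0" using assms by auto
  define x where "x = 2*N - k"
  define y where "y = N + 1"
  have x: "x \<noteq> 0" "k = 2*y - 2 - x" "N = y - 1" using h(1) by (auto simp: x_def y_def)
  have N1: "y \<noteq> 0" "2*y - 1 \<noteq> 0" "y+1 \<noteq> 0" "2*y \<noteq> 0" using assms by (auto simp: y_def)
  show ?thesis unfolding x(2,3) using x(1) N1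
    by (simp add: field_simps) (simp add: algebra_simps power2_eq_square)
qed

lemma step_id:
  assumes N: "N \<ge> 2" and k: "k \<le> N + 1"
  shows "(2*real N+1) * ((real k + 1)^2 * 2^k * cc (Suc N) k) - 2*(real N+2) * ((real k + 1)^2 * 2^k * cc N k)
    = QQ N (Suc k) * 2^(Suc k) * hh N (Suc k) / (real N + 1) - QQ N k * 2^k * hh N k / (real N + 1)"
proof -
  have a: "cc (Suc N) k = hh N k * ((2*real N+2-real k)*(2*real N+1-real k)) / ((2*real N+2)*(2*real N+1))"
    using cc_shift[of N k] N k by (simp add: eq_divide_eq)
  have b: "cc N k = hh N k * (real N + 1 - real k) / (real N + 1)"
    using cc_hh[of N k] by (simp add: eq_divide_eq)
  let ?N = "real N" and ?k = "real k"
  have q1: "QQ N (Suc k) = -(?N+1)*(2*?N+1)-(?N-1)*(?k+1)-(10*?N-7)*(?k+1)*((?k+1)-1)/2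
     -(6*?N-21)*(?k+1)*((?k+1)-1)*((?k+1)-2)/6+(?k+1)*((?k+1)-1)*((?k+1)-2)*((?k+1)-3)/2"
    by (simp add: QQ_def algebra_simps)
  have q0: "QQ N k = -(?N+1)*(2*?N+1)-(?N-1)*?k-(10*?N-7)*?k*(?k-1)/2
     -(6*?N-21)*?k*(?k-1)*(?k-2)/6+?k*(?k-1)*(?k-2)*(?k-3)/2"
    by (simp add: QQ_def)
  have pi0: "(2*?N+1)*(?k+1)^2*(2*?N+2-?k)*(2*?N+1-?k)/((2*?N+2)*(2*?N+1)) - 2*(?N+2)*(?k+1)^2*(?N+1-?k)/(?N+1)
    = 2*QQ N (Suc k)*(?N+1-?k)/((2*?N-?k)*(?N+1)) - QQ N k/(?N+1)"
    unfolding q1 q0 by (rule poly_id) (use N k in auto)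
  have pi: "(2*real N+1)*(real k+1)^2*(2*real N+2-real k)*(2*real N+1-real k)/((2*real N+2)*(2*real N+1)) - 2*(real N+2)*(real k+1)^2*(real N+1-real k)/(real N+1)
    = QQ N (Suc k) * 2 * ((real N + 1 - real k) / (2 * real N - real k)) / (real N + 1) - QQ N k / (real N + 1)"
    unfolding pi0 by simp
  have "(2*real N+1) * ((real k + 1)^2 * 2^k * cc (Suc N) k) - 2*(real N+2) * ((real k + 1)^2 * 2^k * cc N k)
     = (2^k * hh N k) * ((2*real N+1)*(real k+1)^2*(2*real N+2-real k)*(2*real N+1-real k)/((2*real N+2)*(2*real N+1)) - 2*(real N+2)*(real k+1)^2*(real N+1-real k)/(real N+1))"
    unfolding a b by (simp add: algebra_simps)
  also have "\<dots> = (2^k * hh N k) * (QQ N (Suc k) * 2 * ((real N + 1 - real k) / (2 * real N - real k)) / (real N + 1) - QQ N k / (real N + 1))"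
    using pi by simp
  also have "\<dots> = QQ N (Suc k) * 2^(Suc k) * hh N (Suc k) / (real N + 1) - QQ N k * 2^k * hh N k / (real N + 1)"
    by (simp add: hh_Suc algebra_simps)
  finally show ?thesis .
qed

lemma SS_rec:
  assumes N: "N \<ge> 2"
  shows "(2*real N+1) * SS (Suc N) = 2*(real N+2) * SS N + (2*real N+1)"
proof -
  define G where "G k = QQ N k * 2^k * hh N k / (real N + 1)" for k
  have s0: "SS N = (\<Sum>k=0..Suc N. (real k + 1)^2 * 2^k * cc N k)"
    by (simp add: SS_def cc_zero)
  have "(2*real N+1) * SS (Suc N) - 2*(real N+2) * SS N
     = (\<Sum>k=0..Suc N. (2*real N+1) * ((real k + 1)^2 * 2^k * cc (Suc N) k) - 2*(real N+2) * ((real k + 1)^2 * 2^k * cc N k))"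
    unfolding s0 SS_def[of "Suc N"] by (simp only: sum_subtractf sum_distrib_left)
  also have "\<dots> = (\<Sum>k=0..Suc N. G (Suc k) - G k)"
    by (rule sum.cong) (use step_id[OF N] in \<open>auto simp: G_def\<close>)
  also have "\<dots> = G (Suc (Suc N)) - G 0"
    by (rule sum_Suc_diff) simp
  also have "\<dots> = 2*real N + 1"
    using hh_zero[of N] by (simp add: G_def QQ_def hh_def field_simps)
  finally show ?thesis by simp
qed



fun ins :: "nat \<Rightarrow> ptree \<Rightarrow> ptree list" where
  "ins x (Lf a) = [Nd (Lf x) (Lf a), Nd (Lf a) (Lf x)]"
| "ins x (Nd l r) = [Nd (Lf x) (Nd l r), Nd (Nd l r) (Lf x)] @ map (\<lambda>l'. Nd l' r) (ins x l) @ map (\<lambda>r'. Nd l r') (ins x r)"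

fun del :: "nat \<Rightarrow> ptree \<Rightarrow> ptree" where
  "del x (Lf a) = Lf a"
| "del x (Nd l r) = (if l = Lf x then r else if r = Lf x then l else if x \<in> set (leaves l) then Nd (del x l) r else Nd l (del x r))"

lemma leaves_ne: "leaves t \<noteq> []" by (induct t) auto

lemma ins_Nd: "u \<in> set (ins x t) \<Longrightarrow> \<exists>l r. u = Nd l r"
  by (cases t) auto

lemma ins_leaves: "u \<in> set (ins x t) \<Longrightarrow> \<exists>as bs. leaves t = as @ bs \<and> leaves u = as @ x # bs"
proof (induction t arbitrary: u)
  case (Lf a) then show ?case by (auto intro: exI[of _ "[]"] exI[of _ "[a]"])
next
  case (Nd l r)
  from Nd.prems consider "u = Nd (Lf x) (Nd l r)" | "u = Nd (Nd l r) (Lf x)"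
    | l' where "l' \<in> set (ins x l)" "u = Nd l' r" | r' where "r' \<in> set (ins x r)" "u = Nd l r'"
    by auto
  then show ?case
  proof cases
    case 1 then show ?thesis by (intro exI[of _ "[]"] exI[of _ "leaves (Nd l r)"]) auto
  next
    case 2 then show ?thesis by (intro exI[of _ "leaves (Nd l r)"] exI[of _ "[]"]) auto
  next
    case 3
    then obtain as bs where "leaves l = as @ bs" "leaves l' = as @ x # bs" using Nd.IH(1) by blast
    then show ?thesis using 3 by (intro exI[of _ as] exI[of _ "bs @ leaves r"]) auto
  next
    case 4
    then obtain as bs where "leaves r = as @ bs" "leaves r' = as @ x # bs" using Nd.IH(2) by blast
    then show ?thesis using 4 by (intro exI[of _ "leaves l @ as"] exI[of _ bs]) auto
  qed
qed

lemma ins_set_leaves: "u \<in> set (ins x t) \<Longrightarrow> set (leaves u) = insert x (set (leaves t))"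
  by (drule ins_leaves) auto

lemma ins_length_leaves: "u \<in> set (ins x t) \<Longrightarrow> length (leaves u) = Suc (length (leaves t))"
  by (drule ins_leaves) auto

lemma ins_distinct_leaves: "u \<in> set (ins x t) \<Longrightarrow> distinct (leaves u) \<longleftrightarrow> x \<notin> set (leaves t) \<and> distinct (leaves t)"
  by (drule ins_leaves) auto

lemma del_ins: "x \<notin> set (leaves t) \<Longrightarrow> u \<in> set (ins x t) \<Longrightarrow> del x u = t"
proof (induction t arbitrary: u)
  case (Lf a) then show ?case by auto
next
  case (Nd l r)
  from Nd.prems(2) consider "u = Nd (Lf x) (Nd l r)" | "u = Nd (Nd l r) (Lf x)"
    | l' where "l' \<in> set (ins x l)" "u = Nd l' r" | r' where "r' \<in> set (ins x r)" "u = Nd l r'"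
    by auto
  then show ?case
  proof cases
    case 3
    then have "l' \<noteq> Lf x" "r \<noteq> Lf x" "x \<in> set (leaves l')"
      using ins_Nd[of l' x l] ins_set_leaves[of l' x l] Nd.prems(1) by auto
    then show ?thesis using 3 Nd by auto
  next
    case 4
    then have "l \<noteq> Lf x" "r' \<noteq> Lf x" "x \<notin> set (leaves l)"
      using ins_Nd[of r' x r] Nd.prems(1) by auto
    then show ?thesis using 4 Nd by auto
  qed (use Nd.prems in auto)
qed

lemma ins_del: "distinct (leaves u) \<Longrightarrow> x \<in> set (leaves u) \<Longrightarrow> u \<noteq> Lf x \<Longrightarrow> u \<in> set (ins x (del x u))"
proof (induction u)
  case (Lf a) then show ?case by auto
next
  case (Nd l r)
  show ?case
  proof (cases "l = Lf x")
    case True then show ?thesis by (cases r) auto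
  next
    case l: False
    show ?thesis
    proof (cases "r = Lf x")
      case True then show ?thesis using l by (cases l) auto
    next
      case r: False
      show ?thesis
      proof (cases "x \<in> set (leaves l)")
        case True
        then have "l \<in> set (ins x (del x l))" using Nd l by auto
        then show ?thesis using l r True by (cases "del x l") auto
      next
        case False
        then have "x \<in> set (leaves r)" using Nd.prems by auto
        then have "r \<in> set (ins x (del x r))" using Nd r by auto
        then show ?thesis using l r False by (cases "del x l"; cases "del x r") auto
      qed
    qed
  qed
qed

lemma distinct_ins: "x \<notin> set (leaves t) \<Longrightarrow> distinct (ins x t)"
proof (induction t)
  case (Lf a) then show ?case by auto
next
  case (Nd l r)
  have A: "Nd l' r \<noteq> Nd l r'" if "l' \<in> set (ins x l)" "r' \<in> set (ins x r)" for l' r'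
    using ins_set_leaves[OF that(1)] Nd.prems by auto
  have "Nd (Lf x) (Nd l r) \<notin> (\<lambda>l'. Nd l' r) ` set (ins x l)" using ins_Nd[of _ x l] by auto
  moreover have "Nd (Nd l r) (Lf x) \<notin> (\<lambda>l'. Nd l' r) ` set (ins x l)" using Nd.prems by auto
  moreover have "Nd (Lf x) (Nd l r) \<notin> (\<lambda>r'. Nd l r') ` set (ins x r)" using Nd.prems by auto
  moreover have "Nd (Nd l r) (Lf x) \<notin> (\<lambda>r'. Nd l r') ` set (ins x r)" using ins_Nd[of _ x r] by auto
  moreover have "l \<notin> set (ins x l)" "r \<notin> set (ins x r)"
    using ins_set_leaves[of l x l] ins_set_leaves[of r x r] Nd.prems by auto
  ultimately show ?case using Nd A by (auto simp: distinct_map inj_on_def)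
qed

lemma length_ins: "length (ins x t) + 2 = 4 * length (leaves t)"
  by (induction t) auto

lemma length_leaf_depths: "length (leaf_depths t) = length (leaves t)"
  by (induction t) auto

lemma sackin_Lf: "sackin (Lf a) = 0" by (simp add: sackin_def)
lemma sackin_Nd: "sackin (Nd l r) = sackin l + sackin r + length (leaves l) + length (leaves r)"
  by (simp add: sackin_def sum_list_Suc length_leaf_depths)

lemma sum_list_map_cong_const:
  "(\<And>y. y \<in> set xs \<Longrightarrow> f y = g y + c) \<Longrightarrow> sum_list (map f xs) = sum_list (map g xs) + length xs * (c::nat)"
  by (induction xs) auto

lemma sum_ins: "sum_list (map sackin (ins x t)) = 2 * (length (leaves t) + 1) * (2 * sackin t + 1)"
proof (induction t)
  case (Lf a) then show ?case by (simp add: sackin_Lf sackin_Nd)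
next
  case (Nd l r)
  let ?a = "length (leaves l)" and ?b = "length (leaves r)"
  have a1: "?a \<ge> 1" "?b \<ge> 1" using leaves_ne[of l] leaves_ne[of r] by (auto simp: Suc_le_eq)
  have L: "sum_list (map (sackin \<circ> (\<lambda>l'. Nd l' r)) (ins x l)) = sum_list (map sackin (ins x l)) + length (ins x l) * (sackin r + ?a + 1 + ?b)"
    by (rule sum_list_map_cong_const) (auto simp: sackin_Nd ins_length_leaves)
  have R: "sum_list (map (sackin \<circ> (\<lambda>r'. Nd l r')) (ins x r)) = sum_list (map sackin (ins x r)) + length (ins x r) * (sackin l + ?a + ?b + 1)"
    by (rule sum_list_map_cong_const) (auto simp: sackin_Nd ins_length_leaves)
  have la: "length (ins x l) + 2 = 4 * ?a" "length (ins x r) + 2 = 4 * ?b" by (rule length_ins)+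
  obtain a' where ab1: "?a = Suc a'" using a1 by (cases ?a) auto
  obtain b' where ab2: "?b = Suc b'" using a1 by (cases ?b) auto
  note ab = ab1 ab2
  have li: "length (ins x l) = 4*a'+2" "length (ins x r) = 4*b'+2" using la ab by auto
  show ?case
    using L R Nd.IH unfolding li ab by (simp add: sackin_Nd sackin_Lf ab algebra_simps)
qed

lemma L0: "labelled_trees 0 = {}"
  using leaves_ne by (auto simp: labelled_trees_def)

lemma L1: "labelled_trees 1 = {Lf 1}"
proof
  show "{Lf 1} \<subseteq> labelled_trees 1" by (auto simp: labelled_trees_def)
next
  show "labelled_trees 1 \<subseteq> {Lf 1}"
  proof
    fix t assume "t \<in> labelled_trees 1"
    then have d: "distinct (leaves t)" "set (leaves t) = {1}" by (auto simp: labelled_trees_def)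
    then have "length (leaves t) = 1" using distinct_card[OF d(1)] by simp
    then show "t \<in> {Lf 1}" using d
    proof (cases t)
      case (Nd l r)
      then have False using \<open>length (leaves t) = 1\<close> leaves_ne[of l] leaves_ne[of r]
        by (simp del: leaves.simps add: Nd) (cases "leaves l"; cases "leaves r"; simp)
      then show ?thesis ..
    qed auto
  qed
qed

lemma length_L: "t \<in> labelled_trees m \<Longrightarrow> length (leaves t) = m"
  using distinct_card[of "leaves t"] by (auto simp: labelled_trees_def)

lemma L_Suc:
  assumes "m \<ge> 1"
  shows "labelled_trees (Suc m) = (\<Union>t\<in>labelled_trees m. set (ins (Suc m) t))"
proof
  show "(\<Union>t\<in>labelled_trees m. set (ins (Suc m) t)) \<subseteq> labelled_trees (Suc m)"
  proof safe
    fix t u assume t: "t \<in> labelled_trees m" and u: "u \<in> set (ins (Suc m) t)"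
    have "Suc m \<notin> set (leaves t)" using t by (auto simp: labelled_trees_def)
    then show "u \<in> labelled_trees (Suc m)"
      using t ins_distinct_leaves[OF u] ins_set_leaves[OF u] by (auto simp: labelled_trees_def)
  qed
next
  show "labelled_trees (Suc m) \<subseteq> (\<Union>t\<in>labelled_trees m. set (ins (Suc m) t))"
  proof
    fix u assume u: "u \<in> labelled_trees (Suc m)"
    then have d: "distinct (leaves u)" "set (leaves u) = {1..Suc m}" by (auto simp: labelled_trees_def)
    have "1 \<in> set (leaves u)" using d assms by auto
    then have ne: "u \<noteq> Lf (Suc m)" using assms by auto
    have ui: "u \<in> set (ins (Suc m) (del (Suc m) u))"
      by (rule ins_del) (use d ne in auto)
    have "Suc m \<notin> set (leaves (del (Suc m) u))" "distinct (leaves (del (Suc m) u))"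
      using ins_distinct_leaves[OF ui] d by auto
    moreover have "set (leaves (del (Suc m) u)) = {1..m}"
    proof -
      have "set (leaves (del (Suc m) u)) = {1..Suc m} - {Suc m}"
        using ins_set_leaves[OF ui] d(2) calculation(1) by blast
      also have "\<dots> = {1..m}" by auto
      finally show ?thesis .
    qed
    ultimately have "del (Suc m) u \<in> labelled_trees m" by (auto simp: labelled_trees_def)
    then show "u \<in> (\<Union>t\<in>labelled_trees m. set (ins (Suc m) t))" using ui by blast
  qed
qed

lemma L_fin: "finite (labelled_trees m)"
proof (induction m)
  case 0 then show ?case by (simp add: L0)
next
  case (Suc m)
  show ?case
  proof (cases "m = 0")
    case True then show ?thesis using L1 by simp
  next
    case False then show ?thesis using Suc L_Suc[of m] by simp
  qed
qed

lemma L_disj: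
  assumes "t \<in> labelled_trees m" "t' \<in> labelled_trees m" "t \<noteq> t'"
  shows "set (ins (Suc m) t) \<inter> set (ins (Suc m) t') = {}"
proof -
  have "Suc m \<notin> set (leaves t)" "Suc m \<notin> set (leaves t')" using assms by (auto simp: labelled_trees_def)
  then show ?thesis using del_ins assms(3) by blast
qed

lemma card_L_Suc:
  assumes "m \<ge> 1"
  shows "card (labelled_trees (Suc m)) = (4*m-2) * card (labelled_trees m)"
proof -
  have "card (labelled_trees (Suc m)) = (\<Sum>t\<in>labelled_trees m. card (set (ins (Suc m) t)))"
    unfolding L_Suc[OF assms] by (rule card_UN_disjoint) (use L_fin L_disj in auto)
  also have "\<dots> = (\<Sum>t\<in>labelled_trees m. 4*m-2)"
  proof (rule sum.cong)
    fix t assume t: "t \<in> labelled_trees m"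
    have "Suc m \<notin> set (leaves t)" using t by (auto simp: labelled_trees_def)
    then have "card (set (ins (Suc m) t)) = length (ins (Suc m) t)"
      using distinct_card distinct_ins by blast
    then show "card (set (ins (Suc m) t)) = 4*m-2" using length_ins[of "Suc m" t] length_L[OF t] by simp
  qed simp
  finally show ?thesis by simp
qed

lemma sum_L_Suc:
  assumes "m \<ge> 1"
  shows "(\<Sum>t\<in>labelled_trees (Suc m). sackin t) = 2*(m+1)*(2*(\<Sum>t\<in>labelled_trees m. sackin t) + card (labelled_trees m))"
proof -
  have "(\<Sum>t\<in>labelled_trees (Suc m). sackin t) = (\<Sum>t\<in>labelled_trees m. \<Sum>u\<in>set (ins (Suc m) t). sackin u)"
    unfolding L_Suc[OF assms] by (rule sum.UNION_disjoint) (use L_fin L_disj in auto)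
  also have "\<dots> = (\<Sum>t\<in>labelled_trees m. 2*(m+1)*(2*sackin t + 1))"
  proof (rule sum.cong)
    fix t assume t: "t \<in> labelled_trees m"
    have "Suc m \<notin> set (leaves t)" using t by (auto simp: labelled_trees_def)
    then have "(\<Sum>u\<in>set (ins (Suc m) t). sackin u) = sum_list (map sackin (ins (Suc m) t))"
      using sum_list_distinct_conv_sum_set distinct_ins by metis
    then show "(\<Sum>u\<in>set (ins (Suc m) t). sackin u) = 2*(m+1)*(2*sackin t + 1)"
      using sum_ins[of "Suc m" t] length_L[OF t] by simp
  qed simp
  also have "\<dots> = 2*(m+1)*(\<Sum>t\<in>labelled_trees m. 2*sackin t + 1)"
    by (rule sum_distrib_left[symmetric])
  also have "(\<Sum>t\<in>labelled_trees m. 2*sackin t + 1) = 2*(\<Sum>t\<in>labelled_trees m. sackin t) + card (labelled_trees m)"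
    by (simp only: sum.distrib sum_distrib_left[symmetric] card_eq_sum)
  finally show ?thesis .
qed



fun isos :: "ptree \<Rightarrow> ptree set" where
  "isos (Lf a) = {Lf a}"
| "isos (Nd l r) = (\<lambda>(a,b). Nd a b) ` (isos l \<times> isos r) \<union> (\<lambda>(a,b). Nd b a) ` (isos l \<times> isos r)"

lemma iso_isos: "tree_iso s t \<Longrightarrow> t \<in> isos s"
  by (induction rule: tree_iso.induct) auto

lemma isos_iso: "t \<in> isos s \<Longrightarrow> tree_iso s t"
  by (induction s arbitrary: t) (auto intro: tree_iso.intros)

lemma isos_props: "t \<in> isos s \<Longrightarrow> set (leaves t) = set (leaves s) \<and> length (leaves t) = length (leaves s)
   \<and> (distinct (leaves t) \<longleftrightarrow> distinct (leaves s)) \<and> sackin t = sackin s"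
proof (induction s arbitrary: t)
  case (Lf a) then show ?case by auto
next
  case (Nd l r)
  from Nd.prems obtain a b where ab: "a \<in> isos l" "b \<in> isos r" "t = Nd a b \<or> t = Nd b a" by auto
  from Nd.IH(1)[OF ab(1)] Nd.IH(2)[OF ab(2)] ab(3) show ?case
    by (auto simp: sackin_Nd)
qed

lemma isos_self: "s \<in> isos s"
  by (induction s) auto

lemma isos_eq: "t \<in> isos s \<Longrightarrow> isos t = isos s"
proof (induction s arbitrary: t)
  case (Lf a) then show ?case by auto
next
  case (Nd l r)
  from Nd.prems obtain a b where ab: "a \<in> isos l" "b \<in> isos r" "t = Nd a b \<or> t = Nd b a" by auto
  from Nd.IH(1)[OF ab(1)] Nd.IH(2)[OF ab(2)] ab(3) show ?case
    by auto
qed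

lemma isos_card: "distinct (leaves s) \<Longrightarrow> finite (isos s) \<and> card (isos s) = 2^(length (leaves s) - 1)"
proof (induction s)
  case (Lf a) then show ?case by auto
next
  case (Nd l r)
  let ?A = "isos l \<times> isos r"
  have dl: "distinct (leaves l)" "distinct (leaves r)" "set (leaves l) \<inter> set (leaves r) = {}"
    using Nd.prems by auto
  have fl: "finite (isos l)" "card (isos l) = 2^(length (leaves l) - 1)"
       "finite (isos r)" "card (isos r) = 2^(length (leaves r) - 1)" using Nd.IH dl by auto
  have inj1: "inj_on (\<lambda>(a,b). Nd a b) ?A" by (auto simp: inj_on_def)
  have inj2: "inj_on (\<lambda>(a,b). Nd b a) ?A" by (auto simp: inj_on_def)
  have disj: "(\<lambda>(a,b). Nd a b) ` ?A \<inter> (\<lambda>(a,b). Nd b a) ` ?A = {}"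
  proof (rule ccontr)
    assume "(\<lambda>(a,b). Nd a b) ` ?A \<inter> (\<lambda>(a,b). Nd b a) ` ?A \<noteq> {}"
    then obtain a b a' b' where "a \<in> isos l" "b \<in> isos r" "a' \<in> isos l" "b' \<in> isos r" "Nd a b = Nd b' a'"
      by auto
    then have "b' \<in> isos l" "b' \<in> isos r" by auto
    then have "set (leaves l) = set (leaves r)" using isos_props by metis
    then show False using dl(3) leaves_ne[of l]
      by simp
  qed
  have "card (isos (Nd l r)) = card ?A + card ?A"
    using card_Un_disjoint[OF _ _ disj] card_image[OF inj1] card_image[OF inj2] fl by simp
  also have "\<dots> = 2 * 2^(length (leaves l) - 1) * 2^(length (leaves r) - 1)"
    using fl by (simp add: card_cartesian_product)
  also have "\<dots> = 2^(length (leaves (Nd l r)) - 1)"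
  proof -
    obtain a' where a: "length (leaves l) = Suc a'" using leaves_ne[of l] by (cases "length (leaves l)") auto
    obtain b' where b: "length (leaves r) = Suc b'" using leaves_ne[of r] by (cases "length (leaves r)") auto
    show ?thesis using a b by (simp add: power_add)
  qed
  finally show ?case using fl by simp
qed

lemma class_eq: "{(s, t). tree_iso s t} `` {t} = isos t"
  using iso_isos isos_iso by auto

lemma BT_eq: "BT n = isos ` labelled_trees n"
  unfolding BT_def quotient_def class_eq by auto

lemma isos_sub: "t \<in> labelled_trees n \<Longrightarrow> isos t \<subseteq> labelled_trees n"
  using isos_props by (auto simp: labelled_trees_def)

lemma Union_BT: "\<Union>(BT n) = labelled_trees n"
  unfolding BT_eq using isos_sub isos_self by blast

lemma BT_disj: "C \<in> BT n \<Longrightarrow> D \<in> BT n \<Longrightarrow> C \<noteq> D \<Longrightarrow> C \<inter> D = {}"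
  unfolding BT_eq using isos_eq by blast

lemma BT_class:
  assumes "C \<in> BT n"
  shows "finite C" "card C = 2^(n-1)" "\<And>u. u \<in> C \<Longrightarrow> sackin u = sackin_class C"
proof -
  obtain t where t: "t \<in> labelled_trees n" "C = isos t" using assms BT_eq by auto
  have d: "distinct (leaves t)" "length (leaves t) = n" using t length_L by (auto simp: labelled_trees_def)
  show "finite C" "card C = 2^(n-1)" using isos_card[OF d(1)] d t by auto
  have "sackin ` C = {sackin t}" using t isos_props isos_self by blast
  then have "sackin_class C = sackin t" by (simp add: sackin_class_def)
  then show "\<And>u. u \<in> C \<Longrightarrow> sackin u = sackin_class C" using t isos_props by auto
qed

lemma sum_BT: "(\<Sum>t\<in>labelled_trees n. sackin t) = 2^(n-1) * (\<Sum>C\<in>BT n. sackin_class C)"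
proof -
  have "(\<Sum>t\<in>labelled_trees n. sackin t) = (\<Sum>C\<in>BT n. \<Sum>u\<in>C. sackin u)"
    unfolding Union_BT[symmetric] by (rule sum.Union_disjoint[simplified]) (use BT_class BT_disj in auto)
  also have "\<dots> = (\<Sum>C\<in>BT n. 2^(n-1) * sackin_class C)"
    by (rule sum.cong) (auto simp: BT_class)
  finally show ?thesis by (simp add: sum_distrib_left)
qed

lemma card_BT: "card (labelled_trees n) = 2^(n-1) * card (BT n)"
proof -
  have "card (labelled_trees n) = (\<Sum>C\<in>BT n. card C)"
    unfolding Union_BT[symmetric] by (rule card_Union_disjoint) (use BT_class BT_disj in \<open>auto simp: pairwise_def disjnt_def\<close>)
  also have "\<dots> = (\<Sum>C\<in>BT n. 2^(n-1))"
    by (rule sum.cong) (auto simp: BT_class)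
  finally show ?thesis by simp
qed

lemma E_U_eq: "E_U_sackin n = real (\<Sum>t\<in>labelled_trees n. sackin t) / real (card (labelled_trees n))"
  unfolding E_U_sackin_def sum_BT card_BT by (simp add: of_nat_sum)



lemma L1': "labelled_trees (Suc 0) = {Lf 1}" using L1 by simp

lemma card_L_pos: "m \<ge> 1 \<Longrightarrow> card (labelled_trees m) > 0"
proof (induction m rule: nat_induct_at_least)
  case base then show ?case by (simp add: L1')
next
  case (Suc m) then show ?case using card_L_Suc[of m] by simp
qed

lemma E_1: "E_U_sackin 1 = 0"
  by (simp add: E_U_eq L1' sackin_Lf)

lemma E_Suc:
  assumes m: "m \<ge> 1"
  shows "E_U_sackin (Suc m) = (real m + 1) * (2 * E_U_sackin m + 1) / (2 * real m - 1)"
proof -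
  let ?T = "real (\<Sum>t\<in>labelled_trees m. sackin t)" and ?P = "real (card (labelled_trees m))"
  have P: "?P > 0" using card_L_pos[OF m] by simp
  have c: "real (card (labelled_trees (Suc m))) = (4 * real m - 2) * ?P"
    using card_L_Suc[OF m] m by (simp add: of_nat_diff)
  have s: "real (\<Sum>t\<in>labelled_trees (Suc m). sackin t) = 2 * (real m + 1) * (2 * ?T + ?P)"
    unfolding sum_L_Suc[OF m] of_nat_mult of_nat_add of_nat_numeral by simp
  have m1: "2 * real m - 1 \<noteq> 0" using m by simp
  show ?thesis unfolding E_U_eq[of "Suc m"] E_U_eq[of m] c s
    using P m1 by (simp add: field_simps)
qed

lemma SS_1: "SS (Suc 0) = 5"
  by (simp add: SS_def cc_def)

lemma SS_2: "SS 2 = 11"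
  by (simp add: SS_def cc_def eval_nat_numeral)

lemma E_main: "n \<ge> 3 \<Longrightarrow> E_U_sackin n = real n / (2 * real n - 3) * SS (n - 2)"
proof (induction n rule: nat_induct_at_least)
  case base
  have "E_U_sackin 2 = 2" using E_Suc[of 1] E_1 by (simp add: numeral_2_eq_2)
  then have "E_U_sackin 3 = 5" using E_Suc[of 2] by (simp add: numeral_3_eq_3)
  then show ?case by (simp add: SS_1)
next
  case (Suc n)
  define N where "N = n - 2"
  have N: "n = N + 2" using Suc.hyps by (simp add: N_def)
  have N1: "N \<ge> 1" using Suc.hyps N by simp
  have e: "E_U_sackin n = (real N + 2) / (2 * real N + 1) * SS N"
    using Suc.IH N by (simp add: algebra_simps)
  have E: "E_U_sackin (Suc n) = (real N + 3) * (2 * E_U_sackin n + 1) / (2 * real N + 3)"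
    using E_Suc[of n] Suc.hyps N by (simp add: algebra_simps)
  have goal: "(real N + 3) * (2 * ((real N + 2) / (2 * real N + 1) * SS N) + 1) / (2 * real N + 3)
      = (real N + 3) / (2 * real N + 3) * SS (Suc N)"
  proof (cases "N = 1")
    case True then show ?thesis by (simp add: SS_1 SS_2 numeral_2_eq_2[symmetric])
  next
    case False
    then have "N \<ge> 2" using N1 by simp
    from SS_rec[OF this] have ss: "SS (Suc N) = (2*(real N+2) * SS N + (2*real N+1)) / (2*real N+1)"
      by (simp add: eq_divide_eq add_pos_pos mult.commute del: of_nat_Suc)
    have nz: "2 * real N + 1 \<noteq> 0" "2 * real N + 3 \<noteq> 0" by (simp_all add: add_pos_pos)
    show ?thesis unfolding ss using nz by (simp add: field_simps)
  qed
  have "Suc n - 2 = Suc N" "real (Suc n) = real N + 3" "2 * real (Suc n) - 3 = 2 * real N + 3" using N by simp_all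
  then show ?case unfolding E e using goal by (simp add: algebra_simps)
qed

lemma poch2: "pochhammer (2::real) k = (real k + 1) * fact k"
  by (induction k) (auto simp: pochhammer_Suc algebra_simps)

lemma poch_ratio: "pochhammer (- real N) k / pochhammer (- (2 * real N)) k = cc N k"
proof -
  have "pochhammer (- real N) k / pochhammer (- (2 * real N)) k
      = (\<Prod>i\<in>{0..<k}. (- real N + real i) / (- (2 * real N) + real i))"
    by (simp add: pochhammer_prod prod_dividef)
  also have "\<dots> = (\<Prod>i<k. (real N - real i) / (2 * real N - real i))"
  proof (rule prod.cong)
    fix i assume "i \<in> {..<k}"
    have "(- real N + real i) / (- (2 * real N) + real i) = (-(real N - real i)) / (-(2*real N - real i))"
      by simp
    also have "\<dots> = (real N - real i)/(2*real N - real i)" by (rule minus_divide_divide)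
    finally show "(- real N + real i) / (- (2 * real N) + real i) = (real N - real i)/(2*real N - real i)" .
  qed (simp add: atLeast0LessThan)
  finally show ?thesis by (simp add: cc_def)
qed

lemma alg_aux: fixes a F P1 P2 t :: real assumes "F \<noteq> 0"
  shows "(a*F)*(a*F)*P1/(F*P2)*t/F = a^2*t*(P1/P2)"
  using assms by (simp add: field_simps power2_eq_square)

lemma summand:
  assumes "n \<ge> 2"
  shows "pochhammer (2::real) k * pochhammer 2 k * pochhammer (2 - real n) k
         / (pochhammer 1 k * pochhammer (4 - 2 * real n) k) * 2 ^ k / fact k
       = (real k + 1)^2 * 2^k * cc (n-2) k"
proof -
  have a: "2 - real n = - real (n-2)" "4 - 2 * real n = - (2 * real (n-2))" using assms by (simp_all add: of_nat_diff)
  have f: "fact k \<noteq> (0::real)" by simp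
  show ?thesis
    unfolding a poch2 pochhammer_fact[symmetric] poch_ratio[symmetric]
    by (rule alg_aux[OF f])

qed

theorem mainTheorem18:
  fixes n :: nat
  assumes "n \<ge> 3"
  shows "E_U_sackin n =
    real n / (2 * real n - 3) *
      (\<Sum>k = 0..n-2. pochhammer (2::real) k * pochhammer 2 k * pochhammer (2 - real n) k
         / (pochhammer 1 k * pochhammer (4 - 2 * real n) k) * 2 ^ k / fact k)"
proof -
  have "(\<Sum>k = 0..n-2. pochhammer (2::real) k * pochhammer 2 k * pochhammer (2 - real n) k
         / (pochhammer 1 k * pochhammer (4 - 2 * real n) k) * 2 ^ k / fact k) = SS (n-2)"
    unfolding SS_def by (rule sum.cong) (use summand assms in auto)
  then show ?thesis using E_main[OF assms] by simp
qed

end
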